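(* Every finite twin-free interval order $P=(X,\prec)$ has a closed interval representation $\{I(x)=[L(x),R(x)]:x\in X\}$ satisfying the following peeking property: for each pair $u,v\in X$ with $I(u)\subsetneq I(v)$, there exist $x,y\in X$ such that $x$ peeks into $vu$ from the left and $y$ peeks into $vu$ from the right.
   Context: Posets are strict (irreflexive) partial orders. Two points are twins if they have exactly the same comparabilities; $P$ is twin-free if no two distinct points are twins. $P$ is an interval order if there is an assignment of a closed real interval $I(x)=[L(x),R(x)]$ to each $x\in X$ (a closed interval representation) such that $x\prec y$ if and only if $R(x)<L(y)$. Given a representation and $u,v,x\in X$ with $I(u)\subsetneq I(v)$: $x$ peeks into $vu$ if $I(x)$ intersects $I(v)$ but not $I(u)$; it peeks into $vu$ from the left if moreover $R(x)\le L(u)$, and from the right if moreover $R(u)\le L(x)$. *)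

theory Defs
  imports Complex_Main
begin

definition strict_poset :: "'a set \<Rightarrow> ('a \<Rightarrow> 'a \<Rightarrow> bool) \<Rightarrow> bool" where
  "strict_poset X prec \<longleftrightarrow>
     (\<forall>x\<in>X. \<not> prec x x) \<and>
     (\<forall>x\<in>X. \<forall>y\<in>X. \<forall>z\<in>X. prec x y \<longrightarrow> prec y z \<longrightarrow> prec x z)"

definition twins :: "'a set \<Rightarrow> ('a \<Rightarrow> 'a \<Rightarrow> bool) \<Rightarrow> 'a \<Rightarrow> 'a \<Rightarrow> bool" where
  "twins X prec x y \<longleftrightarrow>
     (\<forall>z\<in>X. (prec z x \<longleftrightarrow> prec z y) \<and> (prec x z \<longleftrightarrow> prec y z))"

definition twin_free :: "'a set \<Rightarrow> ('a \<Rightarrow> 'a \<Rightarrow> bool) \<Rightarrow> bool" where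
  "twin_free X prec \<longleftrightarrow> (\<forall>x\<in>X. \<forall>y\<in>X. twins X prec x y \<longrightarrow> x = y)"

definition ival :: "('a \<Rightarrow> real) \<Rightarrow> ('a \<Rightarrow> real) \<Rightarrow> 'a \<Rightarrow> real set" where
  "ival L R x = {L x .. R x}"

definition interval_rep :: "'a set \<Rightarrow> ('a \<Rightarrow> 'a \<Rightarrow> bool) \<Rightarrow> ('a \<Rightarrow> real) \<Rightarrow> ('a \<Rightarrow> real) \<Rightarrow> bool" where
  "interval_rep X prec L R \<longleftrightarrow>
     (\<forall>x\<in>X. L x \<le> R x) \<and>
     (\<forall>x\<in>X. \<forall>y\<in>X. prec x y \<longleftrightarrow> R x < L y)"

definition interval_order :: "'a set \<Rightarrow> ('a \<Rightarrow> 'a \<Rightarrow> bool) \<Rightarrow> bool" where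
  "interval_order X prec \<longleftrightarrow> strict_poset X prec \<and> (\<exists>L R. interval_rep X prec L R)"

definition peeks :: "('a \<Rightarrow> real) \<Rightarrow> ('a \<Rightarrow> real) \<Rightarrow> 'a \<Rightarrow> 'a \<Rightarrow> 'a \<Rightarrow> bool" where
  "peeks L R x v u \<longleftrightarrow>
     ival L R x \<inter> ival L R v \<noteq> {} \<and> ival L R x \<inter> ival L R u = {}"

definition peeks_left :: "('a \<Rightarrow> real) \<Rightarrow> ('a \<Rightarrow> real) \<Rightarrow> 'a \<Rightarrow> 'a \<Rightarrow> 'a \<Rightarrow> bool" where
  "peeks_left L R x v u \<longleftrightarrow> peeks L R x v u \<and> R x \<le> L u"

definition peeks_right :: "('a \<Rightarrow> real) \<Rightarrow> ('a \<Rightarrow> real) \<Rightarrow> 'a \<Rightarrow> 'a \<Rightarrow> 'a \<Rightarrow> bool" where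
  "peeks_right L R x v u \<longleftrightarrow> peeks L R x v u \<and> R u \<le> L x"

end

theory Submission
  imports Defs
begin

lemma icc_meet: "(a::real) \<le> b \<Longrightarrow> c \<le> d \<Longrightarrow> c \<le> b \<Longrightarrow> a \<le> d \<Longrightarrow> {a..b} \<inter> {c..d} \<noteq> {}"
proof -
  assume h: "a \<le> b" "c \<le> d" "c \<le> b" "a \<le> d"
  have "max a c \<in> {a..b} \<inter> {c..d}" using h by auto
  thus ?thesis by blast
qed

lemma icc_disj: "(b::real) < c \<Longrightarrow> {a..b} \<inter> {c..d} = {}"
  by auto

lemma icc_psub:
  assumes "{(a::real)..b} \<subset> {c..d}" "a \<le> b"
  shows "c \<le> a" "b \<le> d" "a \<noteq> c \<or> b \<noteq> d"
proof -
  have s: "{a..b} \<subseteq> {c..d}" using assms by auto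
  show "c \<le> a" "b \<le> d" using s assms(2) by auto
  show "a \<noteq> c \<or> b \<noteq> d" using assms(1) by auto
qed

theorem theorem11:
  fixes X :: "'a set" and prec :: "'a \<Rightarrow> 'a \<Rightarrow> bool"
  assumes "finite X"
    and "interval_order X prec"
    and "twin_free X prec"
  shows "\<exists>L R. interval_rep X prec L R \<and>
           (\<forall>u\<in>X. \<forall>v\<in>X. ival L R u \<subset> ival L R v \<longrightarrow>
              (\<exists>x\<in>X. \<exists>y\<in>X. peeks_left L R x v u \<and> peeks_right L R y v u))"
proof -
  obtain L0 R0 where rep0: "interval_rep X prec L0 R0"
    using assms(2) unfolding interval_order_def by blast
  have le0: "\<And>x. x \<in> X \<Longrightarrow> L0 x \<le> R0 x" and pr0: "\<And>x y. x \<in> X \<Longrightarrow> y \<in> X \<Longrightarrow> prec x y \<longleftrightarrow> R0 x < L0 y"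
    using rep0 unfolding interval_rep_def by auto
  have irr: "\<And>x. x \<in> X \<Longrightarrow> \<not> prec x x" using le0 pr0 by force
  define D where "D y = {w\<in>X. prec w y}" for y
  define Lc where "Lc y = card (D y)" for y
  define S where "S x = {z\<in>X. \<not> prec x z}" for x
  define Rc where "Rc x = Max (Lc ` S x)" for x
  define N where "N = card X"
  have finS: "finite (S x)" for x using assms(1) unfolding S_def by auto
  have xS: "x \<in> X \<Longrightarrow> x \<in> S x" for x using irr unfolding S_def by auto
  have Rc_ge: "x \<in> X \<Longrightarrow> z \<in> S x \<Longrightarrow> Lc z \<le> Rc x" for x z
    unfolding Rc_def using finS by auto
  have Rc_in: "x \<in> X \<Longrightarrow> \<exists>z\<in>S x. Lc z = Rc x" for x
  proof -
    assume "x \<in> X"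
    hence "Lc ` S x \<noteq> {}" using xS by auto
    hence "Rc x \<in> Lc ` S x" unfolding Rc_def using finS Max_in by blast
    thus ?thesis by auto
  qed
  have Lc_le: "Lc x \<le> N" for x
    unfolding Lc_def N_def D_def using assms(1) by (simp add: card_mono)
  have Rc_le: "x \<in> X \<Longrightarrow> Rc x \<le> N" for x using Rc_in Lc_le by metis
  have LcRc: "x \<in> X \<Longrightarrow> Lc x \<le> Rc x" for x using Rc_ge xS by blast
  have chain: "z \<in> X \<Longrightarrow> y \<in> X \<Longrightarrow> D z \<subseteq> D y \<or> D y \<subseteq> D z" for z y
    unfolding D_def using pr0 by (cases "L0 z \<le> L0 y") auto
  have key: "x \<in> X \<Longrightarrow> y \<in> X \<Longrightarrow> prec x y \<longleftrightarrow> Rc x < Lc y" for x y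
  proof
    assume x: "x \<in> X" and y: "y \<in> X" and p: "prec x y"
    obtain z where z: "z \<in> S x" "Lc z = Rc x" using Rc_in x by blast
    have zX: "z \<in> X" and nz: "\<not> prec x z" using z unfolding S_def by auto
    have "x \<in> D y" "x \<notin> D z" using p nz x unfolding D_def by auto
    hence "D z \<subset> D y" using chain[OF zX y] by blast
    hence "card (D z) < card (D y)" using assms(1) unfolding D_def
      by (intro psubset_card_mono) auto
    thus "Rc x < Lc y" using z unfolding Lc_def by simp
  next
    assume x: "x \<in> X" and y: "y \<in> X" and r: "Rc x < Lc y"
    show "prec x y"
    proof (rule ccontr)
      assume "\<not> prec x y"
      hence "y \<in> S x" using y unfolding S_def by auto
      hence "Lc y \<le> Rc x" using Rc_ge x by blast
      thus False using r by simp
    qed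
  qed
  define d :: real where "d = 1 / (4 * (real N + 1))"
  have dpos: "d > 0" unfolding d_def by simp
  have dsmall: "d * real k < 1/4" if "k \<le> N" for k
  proof -
    have "real k < real N + 1" using that by simp
    hence "real k / (4 * (real N + 1)) < 1/4" by (simp add: divide_simps)
    thus ?thesis unfolding d_def by simp
  qed
  define L where "L x = real (Lc x) + d * real (Rc x)" for x
  define R where "R x = real (Rc x) + 1/2 + d * real (Lc x)" for x
  have nn: "0 \<le> d * real k" for k using dpos by simp
  have LR: "x \<in> X \<Longrightarrow> L x \<le> R x" for x
    using LcRc[of x] dsmall[OF Rc_le[of x]] nn[of "Lc x"] unfolding L_def R_def by linarith
  have precLR: "x \<in> X \<Longrightarrow> y \<in> X \<Longrightarrow> prec x y \<longleftrightarrow> R x < L y" for x y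
  proof -
    assume x: "x \<in> X" and y: "y \<in> X"
    have a: "d * real (Lc x) < 1/4" "d * real (Rc y) < 1/4" using dsmall Lc_le Rc_le y by auto
    have b: "0 \<le> d * real (Lc x)" "0 \<le> d * real (Rc y)" using nn by auto
    show ?thesis
    proof (cases "Rc x < Lc y")
      case True
      hence "real (Rc x) + 1 \<le> real (Lc y)" by linarith
      thus ?thesis using key[OF x y] True a b unfolding L_def R_def by simp
    next
      case False
      hence "real (Lc y) \<le> real (Rc x)" by simp
      thus ?thesis using key[OF x y] False a b unfolding L_def R_def by simp
    qed
  qed
  have rep: "interval_rep X prec L R" unfolding interval_rep_def using LR precLR by auto
  have main: "\<exists>x\<in>X. \<exists>y\<in>X. peeks_left L R x v u \<and> peeks_right L R y v u"
    if u: "u \<in> X" and v: "v \<in> X" and sub: "ival L R u \<subset> ival L R v" for u v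
  proof -
    have s: "{L u..R u} \<subset> {L v..R v}" using sub unfolding ival_def .
    note ps = icc_psub[OF s LR[OF u]]
    have au: "d * real (Lc u) < 1/4" "d * real (Rc u) < 1/4" "d * real (Lc v) < 1/4" "d * real (Rc v) < 1/4"
      using dsmall Lc_le Rc_le u v by auto
    have bu: "0 \<le> d * real (Lc u)" "0 \<le> d * real (Rc u)" "0 \<le> d * real (Lc v)" "0 \<le> d * real (Rc v)"
      using nn by auto
    have l1: "Lc v \<le> Lc u"
    proof (rule ccontr)
      assume "\<not> Lc v \<le> Lc u"
      hence "real (Lc u) + 1 \<le> real (Lc v)" by linarith
      thus False using ps(1) au bu unfolding L_def by linarith
    qed
    have r1: "Rc u \<le> Rc v"
    proof (rule ccontr)
      assume "\<not> Rc u \<le> Rc v"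
      hence "real (Rc v) + 1 \<le> real (Rc u)" by linarith
      thus False using ps(2) au bu unfolding R_def by linarith
    qed
    have strict: "Lc v < Lc u \<and> Rc u < Rc v"
    proof (rule ccontr)
      assume "\<not> (Lc v < Lc u \<and> Rc u < Rc v)"
      hence "Lc v = Lc u \<or> Rc u = Rc v" using l1 r1 by linarith
      hence eq: "Lc v = Lc u \<and> Rc u = Rc v"
      proof
        assume e: "Lc v = Lc u"
        hence "d * real (Rc v) \<le> d * real (Rc u)" using ps(1) unfolding L_def by simp
        hence "Rc v \<le> Rc u" using dpos by simp
        thus ?thesis using e r1 by simp
      next
        assume e: "Rc u = Rc v"
        hence "d * real (Lc u) \<le> d * real (Lc v)" using ps(2) unfolding R_def by simp
        hence "Lc u \<le> Lc v" using dpos by simp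
        thus ?thesis using e l1 by simp
      qed
      thus False using ps(3) unfolding L_def R_def by simp
    qed
    have Dsub: "D v \<subseteq> D u" unfolding D_def using key strict u v
      by auto
    have "D v \<noteq> D u" using strict unfolding Lc_def by auto
    then obtain x where xu: "x \<in> D u" and xv: "x \<notin> D v" using Dsub by blast
    have xX: "x \<in> X" and pxu: "prec x u" and npxv: "\<not> prec x v"
      using xu xv unfolding D_def by auto
    have h1: "R x < L u" using precLR[OF xX u] pxu by simp
    have h2: "L v \<le> R x" using precLR[OF xX v] npxv by simp
    have h3: "L x \<le> R v" using h1 ps(2) LR[OF u] LR[OF xX] by linarith
    have pl: "peeks_left L R x v u"
      unfolding peeks_left_def peeks_def ival_def
      using icc_meet[OF LR[OF xX] LR[OF v] h2 h3] icc_disj[OF h1] h1 by simp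
    obtain y where yS: "y \<in> S v" and yL: "Lc y = Rc v" using Rc_in v by blast
    have yX: "y \<in> X" and npvy: "\<not> prec v y" using yS unfolding S_def by auto
    have puy: "prec u y" using key[OF u yX] strict yL by simp
    have g1: "R u < L y" using precLR[OF u yX] puy by simp
    have g2: "L y \<le> R v" using precLR[OF v yX] npvy by simp
    have g3: "L v \<le> R y" using g1 ps(1) LR[OF u] LR[OF yX] by linarith
    have pr: "peeks_right L R y v u"
      unfolding peeks_right_def peeks_def ival_def
      using icc_meet[OF LR[OF yX] LR[OF v] g3 g2] icc_disj[OF g1] g1 by (simp add: Int_commute)
    show ?thesis using pl pr xX yX by blast
  qed
  show ?thesis using rep main by blast
qed

end
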